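(* Consider the SRLOD model on a finite connected graph $G$ with $N\ge2$ agents, learning rate $\alpha\in(0,1)$ and exploration rate $\epsilon\in(0,1)$. For every time $t_0$, every configuration of Q-values in $[-1,1]$ at time $t_0$ with preference vector $y_{t_0}=\eta$, and every $\zeta\in\mathcal{S}=\{-1,1\}^N$, there exists $k<\infty$ such that $$\mathbb{P}(y_{t_0+k}=\zeta\mid \text{Q-values at time } t_0)>0.$$ In particular all states of $\mathcal{S}$ communicate for the preference-vector process.
   Context: The SRLOD (symmetric reinforcement learning for opinion dynamics) model: $G=(V,E)$ is a finite simple undirected graph with $V=\{1,\dots,N\}$. Each agent $i$ holds Q-values $q^i_1(t),q^i_{-1}(t)$, initialized in $[-1,1]$. The preference vector $y_t\in\{-1,1\}^N$ has $y_t(i)=1$ if $q^i_1(t)\ge q^i_{-1}(t)$ and $y_t(i)=-1$ otherwise; $y_t(i)$ is agent $i$'s preferred opinion. In each discrete round $t$, an edge $(i,j)\in E$ is chosen uniformly at random; independently, each of $i$ and $j$ expresses an opinion $o_i(t),o_j(t)\in\{-1,1\}$, equal to its preferred opinion with probability $1-\epsilon$ and the other opinion with probability $\epsilon$; then both update only the Q-value of the opinion they expressed: $q^i_{o_i(t)}(t+1)=(1-\alpha)q^i_{o_i(t)}(t)+\alpha\,o_i(t)o_j(t)$ and $q^j_{o_j(t)}(t+1)=(1-\alpha)q^j_{o_j(t)}(t)+\alpha\,o_i(t)o_j(t)$. All other Q-values are unchanged. *)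

theory Defs
  imports "HOL-Probability.Probability"
begin

text \<open>Agents are 1..N. A Q-value configuration is a function
  Q :: nat \<Rightarrow> int \<Rightarrow> real, where Q i 1 and Q i (-1) are agent i's Q-values.\<close>

definition simple_graph :: "nat \<Rightarrow> (nat \<times> nat) set \<Rightarrow> bool" where
  "simple_graph N E \<longleftrightarrow> E \<subseteq> {1..N} \<times> {1..N} \<and> sym E \<and> irrefl E"

definition connected_graph :: "nat \<Rightarrow> (nat \<times> nat) set \<Rightarrow> bool" where
  "connected_graph N E \<longleftrightarrow> (\<forall>i\<in>{1..N}. \<forall>j\<in>{1..N}. (i, j) \<in> E\<^sup>*)"

definition edges :: "(nat \<times> nat) set \<Rightarrow> (nat \<times> nat) set" where
  "edges E = {(i, j). (i, j) \<in> E \<and> i < j}"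

definition pref :: "(nat \<Rightarrow> int \<Rightarrow> real) \<Rightarrow> nat \<Rightarrow> int" where
  "pref Q i = (if Q i 1 \<ge> Q i (-1) then 1 else -1)"

definition express :: "real \<Rightarrow> int \<Rightarrow> int pmf" where
  "express eps y = map_pmf (\<lambda>b. if b then - y else y) (bernoulli_pmf eps)"

definition update :: "real \<Rightarrow> (nat \<Rightarrow> int \<Rightarrow> real) \<Rightarrow> nat \<Rightarrow> nat \<Rightarrow> int \<Rightarrow> int
    \<Rightarrow> (nat \<Rightarrow> int \<Rightarrow> real)" where
  "update \<alpha> Q i j oi oj =
     (let r = real_of_int (oi * oj);
          Q1 = Q(i := (Q i)(oi := (1 - \<alpha>) * Q i oi + \<alpha> * r))
      in Q1(j := (Q1 j)(oj := (1 - \<alpha>) * Q j oj + \<alpha> * r)))"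

definition srlod_step :: "real \<Rightarrow> real \<Rightarrow> (nat \<times> nat) set \<Rightarrow> (nat \<Rightarrow> int \<Rightarrow> real)
    \<Rightarrow> (nat \<Rightarrow> int \<Rightarrow> real) pmf" where
  "srlod_step \<alpha> eps E Q =
     bind_pmf (pmf_of_set (edges E)) (\<lambda>(i, j).
     bind_pmf (express eps (pref Q i)) (\<lambda>oi.
     bind_pmf (express eps (pref Q j)) (\<lambda>oj.
     return_pmf (update \<alpha> Q i j oi oj))))"

text \<open>Distribution of the Q-configuration k rounds after configuration Q
  (the chain is time-homogeneous).\<close>
definition srlod_run :: "real \<Rightarrow> real \<Rightarrow> (nat \<times> nat) set \<Rightarrow> nat \<Rightarrow> (nat \<Rightarrow> int \<Rightarrow> real)
    \<Rightarrow> (nat \<Rightarrow> int \<Rightarrow> real) pmf" where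
  "srlod_run \<alpha> eps E k Q = ((\<lambda>p. bind_pmf p (srlod_step \<alpha> eps E)) ^^ k) (return_pmf Q)"

end

theory Submission
  imports Defs
begin

lemma run_step:
  assumes "Q' \<in> set_pmf (srlod_run \<alpha> eps E k Q)" "Q'' \<in> set_pmf (srlod_step \<alpha> eps E Q')"
  shows "Q'' \<in> set_pmf (srlod_run \<alpha> eps E (Suc k) Q)"
  using assms by (auto simp: srlod_run_def)

lemma reach_run:
  assumes "(\<lambda>Q Q'. Q' \<in> set_pmf (srlod_step \<alpha> eps E Q))\<^sup>*\<^sup>* Q Q'"
  shows "\<exists>k. Q' \<in> set_pmf (srlod_run \<alpha> eps E k Q)"
  using assms
proof (induction rule: rtranclp_induct)
  case base
  have "Q \<in> set_pmf (srlod_run \<alpha> eps E 0 Q)" by (simp add: srlod_run_def)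
  then show ?case by blast
next
  case (step y z)
  then obtain k where "y \<in> set_pmf (srlod_run \<alpha> eps E k Q)" by blast
  with step(2) show ?case using run_step by blast
qed

lemma set_express:
  assumes "0 < eps" "eps < 1"
  shows "set_pmf (express eps y) = {y, -y}"
  using assms by (auto simp: express_def)

lemma pref_pm: "pref Q i \<in> {-1, 1}"
  by (simp add: pref_def)

lemma update_swap:
  assumes "i \<noteq> j"
  shows "update \<alpha> Q j i b a = update \<alpha> Q i j a b"
  using assms by (auto simp: update_def Let_def fun_eq_iff mult.commute)

lemma update_in_step:
  assumes "simple_graph N E" "0 < eps" "eps < 1" "(i, j) \<in> E"
    "a \<in> {-1, 1}" "b \<in> {-1, 1}"
  shows "update \<alpha> Q i j a b \<in> set_pmf (srlod_step \<alpha> eps E Q)"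
proof -
  have fin: "finite (edges E)"
  proof -
    have "edges E \<subseteq> {1..N} \<times> {1..N}" using assms(1) by (auto simp: edges_def simple_graph_def)
    then show ?thesis by (rule finite_subset) auto
  qed
  have ij: "i \<noteq> j" using assms(1,4) by (auto simp: simple_graph_def irrefl_def)
  have mem: "\<And>i j a b. (i, j) \<in> edges E \<Longrightarrow> a \<in> {-1, 1} \<Longrightarrow> b \<in> {-1, 1} \<Longrightarrow>
      update \<alpha> Q i j a b \<in> set_pmf (srlod_step \<alpha> eps E Q)"
  proof -
    fix i j a b assume e: "(i, j) \<in> edges E" and a: "a \<in> {-1::int, 1}" and b: "b \<in> {-1::int, 1}"
    have ne: "edges E \<noteq> {}" using e by auto
    have a': "a \<in> set_pmf (express eps (pref Q i))"
      using a pref_pm[of Q i] assms(2,3) by (auto simp: set_express)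
    have b': "b \<in> set_pmf (express eps (pref Q j))"
      using b pref_pm[of Q j] assms(2,3) by (auto simp: set_express)
    show "update \<alpha> Q i j a b \<in> set_pmf (srlod_step \<alpha> eps E Q)"
    proof -
      have "update \<alpha> Q i j a b \<in> set_pmf (express eps (pref Q i) \<bind> (\<lambda>oi. express eps (pref Q j) \<bind>
             (\<lambda>oj. return_pmf (update \<alpha> Q i j oi oj))))"
        unfolding set_bind_pmf using a' b' by auto
      then show ?thesis unfolding srlod_step_def set_bind_pmf
        by (intro UN_I[of "(i, j)"]) (use fin ne e in simp_all)
    qed
  qed
  show ?thesis
  proof (cases "i < j")
    case True
    then have "(i, j) \<in> edges E" using assms(4) by (simp add: edges_def)
    then show ?thesis using mem assms(5,6) by blast
  next
    case False
    then have "j < i" using ij by simp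
    moreover have "(j, i) \<in> E" using assms(1,4) by (auto simp: simple_graph_def sym_def)
    ultimately have "(j, i) \<in> edges E" by (simp add: edges_def)
    then have "update \<alpha> Q j i b a \<in> set_pmf (srlod_step \<alpha> eps E Q)" using mem assms(5,6) by blast
    then show ?thesis using update_swap[OF ij] by simp
  qed
qed

lemma iter_update:
  assumes "i \<noteq> j"
  shows "((\<lambda>Q. update \<alpha> Q i j a b) ^^ n) Q i a
           = real_of_int (a*b) + (1-\<alpha>)^n * (Q i a - real_of_int (a*b))
       \<and> ((\<lambda>Q. update \<alpha> Q i j a b) ^^ n) Q j b
           = real_of_int (a*b) + (1-\<alpha>)^n * (Q j b - real_of_int (a*b))
       \<and> (\<forall>k c. (k, c) \<noteq> (i, a) \<and> (k, c) \<noteq> (j, b) \<longrightarrow>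
            ((\<lambda>Q. update \<alpha> Q i j a b) ^^ n) Q k c = Q k c)"
proof (induction n)
  case 0
  then show ?case by simp
next
  case (Suc n)
  define P where "P = ((\<lambda>Q. update \<alpha> Q i j a b) ^^ n) Q"
  have eq: "((\<lambda>Q. update \<alpha> Q i j a b) ^^ Suc n) Q = update \<alpha> P i j a b"
    by (simp add: P_def)
  have IH: "P i a = real_of_int (a*b) + (1-\<alpha>)^n * (Q i a - real_of_int (a*b))"
      "P j b = real_of_int (a*b) + (1-\<alpha>)^n * (Q j b - real_of_int (a*b))"
      "\<forall>k c. (k, c) \<noteq> (i, a) \<and> (k, c) \<noteq> (j, b) \<longrightarrow> P k c = Q k c"
    using Suc.IH unfolding P_def by blast+
  have u1: "update \<alpha> P i j a b i a = (1-\<alpha>) * P i a + \<alpha> * real_of_int (a*b)"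
    using assms by (simp add: update_def Let_def)
  have u2: "update \<alpha> P i j a b j b = (1-\<alpha>) * P j b + \<alpha> * real_of_int (a*b)"
    using assms by (simp add: update_def Let_def)
  have u3: "\<forall>k c. (k, c) \<noteq> (i, a) \<and> (k, c) \<noteq> (j, b) \<longrightarrow> update \<alpha> P i j a b k c = P k c"
    using assms by (simp add: update_def Let_def)
  have alg: "\<And>x r t. (1-\<alpha>) * (r + t * (x - r)) + \<alpha> * r = r + ((1-\<alpha>) * t) * (x - r)"
    by (simp add: algebra_simps)
  show ?case unfolding eq u1 u2 IH(1) IH(2)
  proof (intro conjI)
    show "\<forall>k c. (k, c) \<noteq> (i, a) \<and> (k, c) \<noteq> (j, b) \<longrightarrow> update \<alpha> P i j a b k c = Q k c"
      using u3 IH(3) by simp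
  qed (simp_all add: algebra_simps)
qed

lemma iter_reach:
  assumes "simple_graph N E" "0 < eps" "eps < 1" "(i, j) \<in> E"
    "a \<in> {-1, 1}" "b \<in> {-1, 1}"
  shows "(\<lambda>Q Q'. Q' \<in> set_pmf (srlod_step \<alpha> eps E Q))\<^sup>*\<^sup>* Q (((\<lambda>Q. update \<alpha> Q i j a b) ^^ n) Q)"
proof (induction n)
  case 0
  then show ?case by simp
next
  case (Suc n)
  then show ?case using update_in_step[OF assms]
    by (simp add: rtranclp.rtrancl_into_rtrancl)
qed

lemma ev_pos:
  assumes "0 < \<alpha>" "\<alpha> < 1" "r = 1 \<or> r = -1"
  shows "\<forall>\<^sub>F n in sequentially. r * (r + (1-\<alpha>)^n * (x - r)) > (0::real)"
proof -
  have L: "(\<lambda>n. (1-\<alpha>)^n) \<longlonglongrightarrow> 0" using assms by (intro LIMSEQ_power_zero) (simp add: abs_if)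
  have "(\<lambda>n. r * (r + (1-\<alpha>)^n * (x - r))) \<longlonglongrightarrow> r * (r + 0 * (x - r))"
    by (rule tendsto_mult[OF tendsto_const tendsto_add[OF tendsto_const tendsto_mult[OF L tendsto_const]]])
  moreover have "r * (r + 0 * (x - r)) > 0" using assms(3) by auto
  ultimately show ?thesis by (rule order_tendstoD)
qed

definition good :: "(nat \<Rightarrow> int) \<Rightarrow> (nat \<Rightarrow> int \<Rightarrow> real) \<Rightarrow> nat \<Rightarrow> int \<Rightarrow> bool" where
  "good \<zeta> Q k c \<longleftrightarrow> (c = \<zeta> k \<longrightarrow> Q k c > 0) \<and> (c = - \<zeta> k \<longrightarrow> Q k c < 0)"

lemma good_target:
  fixes c z r :: int and v :: real
  assumes "c \<in> {-1,1}" "z \<in> {-1,1}" "real_of_int r = (if c = z then 1 else -1)"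
    "real_of_int r * v > 0"
  shows "(c = z \<longrightarrow> v > 0) \<and> (c = -z \<longrightarrow> v < 0)"
proof -
  have "c = -z \<Longrightarrow> c \<noteq> z" using assms(1,2) by auto
  then show ?thesis using assms(3,4) by (cases "c = z") (auto simp: zero_less_mult_iff)
qed

lemma ev_obtain:
  assumes "\<forall>\<^sub>F n in sequentially. P n"
  obtains n where "P n"
  using assms eventually_sequentially by blast

abbreviation stepr where
  "stepr \<alpha> eps E \<equiv> (\<lambda>Q Q'. Q' \<in> set_pmf (srlod_step \<alpha> eps E Q))"

lemma block:
  assumes sg: "simple_graph N E" and e: "0 < eps" "eps < 1" and al: "0 < \<alpha>" "\<alpha> < 1"
    and ij: "(i, j) \<in> E" and zi: "\<zeta> i \<in> {-1, 1}" and zj: "\<zeta> j \<in> {-1, 1}"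
  shows "\<exists>Q'. (stepr \<alpha> eps E)\<^sup>*\<^sup>* Q Q' \<and> good \<zeta> Q' i 1 \<and> good \<zeta> Q' i (-1)
           \<and> (\<forall>k c. good \<zeta> Q k c \<longrightarrow> good \<zeta> Q' k c)"
proof -
  have inj: "i \<noteq> j" using sg ij by (auto simp: simple_graph_def irrefl_def)
  define a1 where "a1 = - \<zeta> j"
  define b where "b = \<zeta> i"
  define a2 where "a2 = \<zeta> j"
  define r1 where "r1 = real_of_int (a1 * b)"
  define r2 where "r2 = real_of_int (a2 * b)"
  have pm: "a1 \<in> {-1,1}" "a2 \<in> {-1,1}" "b \<in> {-1,1}" using zi zj by (auto simp: a1_def a2_def b_def)
  have r1pm: "r1 = 1 \<or> r1 = -1" using zi zj by (auto simp: r1_def a1_def b_def)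
  have r2pm: "r2 = 1 \<or> r2 = -1" using zi zj by (auto simp: r2_def a2_def b_def)
  obtain n1 where n1: "r1 * (r1 + (1-\<alpha>)^n1 * (Q i a1 - r1)) > 0"
    using ev_pos[OF al r1pm, of "Q i a1"] by (rule ev_obtain)
  define Q1 where "Q1 = ((\<lambda>Q. update \<alpha> Q i j a1 b) ^^ n1) Q"
  have it1: "Q1 i a1 = r1 + (1-\<alpha>)^n1 * (Q i a1 - r1)"
     "\<forall>k c. (k, c) \<noteq> (i, a1) \<and> (k, c) \<noteq> (j, b) \<longrightarrow> Q1 k c = Q k c"
    using iter_update[OF inj, where \<alpha>=\<alpha> and a=a1 and b=b and n=n1 and Q=Q] unfolding Q1_def r1_def by blast+
  obtain n2 where n2: "r2 * (r2 + (1-\<alpha>)^n2 * (Q1 i a2 - r2)) > 0 \<and>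
       r2 * (r2 + (1-\<alpha>)^n2 * (Q1 j b - r2)) > 0"
    using eventually_conj[OF ev_pos[OF al r2pm, of "Q1 i a2"] ev_pos[OF al r2pm, of "Q1 j b"]]
    by (rule ev_obtain)
  define Q2 where "Q2 = ((\<lambda>Q. update \<alpha> Q i j a2 b) ^^ n2) Q1"
  have it2: "Q2 i a2 = r2 + (1-\<alpha>)^n2 * (Q1 i a2 - r2)"
     "Q2 j b = r2 + (1-\<alpha>)^n2 * (Q1 j b - r2)"
     "\<forall>k c. (k, c) \<noteq> (i, a2) \<and> (k, c) \<noteq> (j, b) \<longrightarrow> Q2 k c = Q1 k c"
    using iter_update[OF inj, where \<alpha>=\<alpha> and a=a2 and b=b and n=n2 and Q=Q1] unfolding Q2_def r2_def by blast+
  have reach: "(stepr \<alpha> eps E)\<^sup>*\<^sup>* Q Q2"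
  proof -
    have "(stepr \<alpha> eps E)\<^sup>*\<^sup>* Q Q1"
      using iter_reach[OF sg e ij pm(1) pm(3), where \<alpha>=\<alpha> and Q=Q and n=n1] unfolding Q1_def .
    moreover have "(stepr \<alpha> eps E)\<^sup>*\<^sup>* Q1 Q2"
      using iter_reach[OF sg e ij pm(2) pm(3), where \<alpha>=\<alpha> and Q=Q1 and n=n2] unfolding Q2_def .
    ultimately show ?thesis by (rule rtranclp_trans)
  qed
  have a12: "a1 \<noteq> a2" using zj by (auto simp: a1_def a2_def)
  have g1: "good \<zeta> Q2 i a1"
  proof -
    have "Q2 i a1 = Q1 i a1" using it2(3) a12 inj by auto
    moreover have "real_of_int (a1*b) = (if a1 = \<zeta> i then 1 else -1)"
      using zi zj by (auto simp: a1_def b_def)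
    ultimately show ?thesis unfolding good_def using good_target[OF pm(1) zi, of "a1*b" "Q1 i a1"]
      n1 it1(1) r1_def by auto
  qed
  have g2: "good \<zeta> Q2 i a2"
  proof -
    have "real_of_int (a2*b) = (if a2 = \<zeta> i then 1 else -1)"
      using zi zj by (auto simp: a2_def b_def)
    then show ?thesis unfolding good_def using good_target[OF pm(2) zi, of "a2*b" "Q2 i a2"]
      n2 it2(1) r2_def by auto
  qed
  have g3: "good \<zeta> Q2 j b"
  proof -
    have "real_of_int (a2*b) = (if b = \<zeta> j then 1 else -1)"
      using zi zj by (auto simp: a2_def b_def)
    then show ?thesis unfolding good_def using good_target[OF pm(3) zj, of "a2*b" "Q2 j b"]
      n2 it2(2) r2_def by (auto simp: mult.commute)
  qed
  have gi: "good \<zeta> Q2 i 1 \<and> good \<zeta> Q2 i (-1)"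
    using g1 g2 zj by (auto simp: a1_def a2_def)
  have rest: "\<forall>k c. good \<zeta> Q k c \<longrightarrow> good \<zeta> Q2 k c"
  proof (intro allI impI)
    fix k c assume gq: "good \<zeta> Q k c"
    show "good \<zeta> Q2 k c"
    proof (cases "(k, c) = (i, a1) \<or> (k, c) = (i, a2) \<or> (k, c) = (j, b)")
      case True
      then show ?thesis using g1 g2 g3 by auto
    next
      case False
      then have eqk: "Q2 k c = Q k c" using it1(2) it2(3) by auto
      show ?thesis using gq unfolding good_def eqk .
    qed
  qed
  show ?thesis using reach gi rest by blast
qed

lemma neighbor:
  fixes N i :: nat and E :: "(nat \<times> nat) set"
  assumes "N \<ge> 2" "simple_graph N E" "connected_graph N E" "i \<in> {1..N}"
  shows "\<exists>j. (i, j) \<in> E \<and> j \<in> {1..N}"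
proof -
  define i' :: nat where "i' = (if i = 1 then 2 else 1)"
  have i'1: "i' \<in> {1..N}" using assms(1) by (simp add: i'_def)
  have i'2: "i \<noteq> i'" by (simp add: i'_def)
  have "(i, i') \<in> E\<^sup>*" using assms(3,4) i'1 unfolding connected_graph_def by blast
  then obtain j where ij: "(i, j) \<in> E"
  proof (cases rule: converse_rtranclE)
    case base
    then show ?thesis using i'2 by simp
  next
    case (step y)
    then show ?thesis using that by blast
  qed
  moreover have "j \<in> {1..N}" using assms(2) ij unfolding simple_graph_def by blast
  ultimately show ?thesis by blast
qed

lemma good_pref:
  assumes "good \<zeta> Q k 1" "good \<zeta> Q k (-1)" "\<zeta> k \<in> {-1, 1}"
  shows "pref Q k = \<zeta> k"
proof (cases "\<zeta> k = 1")
  case True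
  then have "Q k 1 > 0" "Q k (-1) < 0" using assms(1,2) unfolding good_def by auto
  then show ?thesis using True by (simp add: pref_def)
next
  case False
  then have z: "\<zeta> k = -1" using assms(3) by auto
  then have "Q k (-1) > 0" "Q k 1 < 0" using assms(1,2) unfolding good_def by auto
  then show ?thesis using z by (simp add: pref_def)
qed

theorem proposition1:
  fixes N :: nat and E :: "(nat \<times> nat) set" and \<alpha> eps :: real
    and Q :: "nat \<Rightarrow> int \<Rightarrow> real" and \<zeta> :: "nat \<Rightarrow> int"
  assumes "N \<ge> 2"
    and "simple_graph N E" and "connected_graph N E"
    and "0 < \<alpha>" "\<alpha> < 1" and "0 < eps" "eps < 1"
    and "\<forall>i\<in>{1..N}. \<forall>a\<in>{-1, 1}. Q i a \<in> {-1..1}"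
    and "\<forall>i\<in>{1..N}. \<zeta> i \<in> {-1, 1}"
  shows "\<exists>k. measure_pmf.prob (srlod_run \<alpha> eps E k Q)
              {Q'. \<forall>i\<in>{1..N}. pref Q' i = \<zeta> i} > 0"
proof -
  have main: "m \<le> N \<Longrightarrow> \<exists>Q'. (stepr \<alpha> eps E)\<^sup>*\<^sup>* Q Q' \<and>
      (\<forall>k\<in>{1..m}. good \<zeta> Q' k 1 \<and> good \<zeta> Q' k (-1))" for m
  proof (induction m)
    case 0
    have "(stepr \<alpha> eps E)\<^sup>*\<^sup>* Q Q" by simp
    then show ?case by (intro exI[of _ Q]) simp
  next
    case (Suc m)
    then obtain Q1 where Q1: "(stepr \<alpha> eps E)\<^sup>*\<^sup>* Q Q1"
      "\<forall>k\<in>{1..m}. good \<zeta> Q1 k 1 \<and> good \<zeta> Q1 k (-1)" by (meson Suc_leD)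
    have si: "Suc m \<in> {1..N}" using Suc.prems by auto
    obtain j where j: "(Suc m, j) \<in> E" "j \<in> {1..N}" using neighbor[OF assms(1-3) si] by blast
    obtain Q2 where Q2: "(stepr \<alpha> eps E)\<^sup>*\<^sup>* Q1 Q2" "good \<zeta> Q2 (Suc m) 1" "good \<zeta> Q2 (Suc m) (-1)"
      "\<forall>k c. good \<zeta> Q1 k c \<longrightarrow> good \<zeta> Q2 k c"
    proof -
      have zi: "\<zeta> (Suc m) \<in> {-1, 1}" using assms(9) si by blast
      have zj: "\<zeta> j \<in> {-1, 1}" using assms(9) j(2) by blast
      show ?thesis using block[OF assms(2) assms(6,7) assms(4,5) j(1) zi zj, where Q=Q1] that
        by (elim exE conjE) assumption
    qed
    have "(stepr \<alpha> eps E)\<^sup>*\<^sup>* Q Q2" using Q1(1) Q2(1) by (rule rtranclp_trans)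
    moreover have "\<forall>k\<in>{1..Suc m}. good \<zeta> Q2 k 1 \<and> good \<zeta> Q2 k (-1)"
    proof
      fix k assume "k \<in> {1..Suc m}"
      then have "k \<in> {1..m} \<or> k = Suc m" by auto
      then show "good \<zeta> Q2 k 1 \<and> good \<zeta> Q2 k (-1)"
      proof
        assume "k \<in> {1..m}"
        then show ?thesis using Q1(2) Q2(4) by blast
      qed (use Q2(2,3) in simp)
    qed
    ultimately show ?case by blast
  qed
  obtain Q' where Q': "(stepr \<alpha> eps E)\<^sup>*\<^sup>* Q Q'" "\<forall>k\<in>{1..N}. good \<zeta> Q' k 1 \<and> good \<zeta> Q' k (-1)"
    using main[of N, OF order_refl] by (elim exE conjE)
  obtain k where k: "Q' \<in> set_pmf (srlod_run \<alpha> eps E k Q)" using reach_run[OF Q'(1)] by (elim exE)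
  have "\<forall>i\<in>{1..N}. pref Q' i = \<zeta> i"
  proof
    fix i assume i: "i \<in> {1..N}"
    have "good \<zeta> Q' i 1" "good \<zeta> Q' i (-1)" using Q'(2) i by auto
    moreover have "\<zeta> i \<in> {-1, 1}" using assms(9) i by auto
    ultimately show "pref Q' i = \<zeta> i" by (rule good_pref)
  qed
  then have "Q' \<in> {Q'. \<forall>i\<in>{1..N}. pref Q' i = \<zeta> i}" by simp
  then have "measure_pmf.prob (srlod_run \<alpha> eps E k Q) {Q'. \<forall>i\<in>{1..N}. pref Q' i = \<zeta> i} > 0"
    by (rule measure_pmf_posI[OF k])
  then show ?thesis by (rule exI)
qed

end
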